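(* Let $K$ be an infinite, algebraically closed, totally ordered quasi-field of characteristic $1$. The natural map from $K\{X_1,\dots,X_n\}$ to the quasi-ring of polynomial functions $K^n\to K$, sending the class of $P$ to $x\mapsto P(x)$, is well defined and is an isomorphism of quasi-rings.
   Context: A quasi-field of characteristic $1$ is a commutative semiring $K$ with $1+1=1$ in which every nonzero element is multiplicatively invertible; ordered by $u\le v$ iff $u+v=v$, totally ordered meaning the order is total. $K$ is algebraically closed if every nonconstant polynomial of $K[X]$ has a root in $K$ (a point where it vanishes or where the maximum of the values of its monomials is attained at least twice). $K\{X_1,\dots,X_n\}$ is the image of $K[X_1,\dots,X_n]$ in its quasi-field of fractions, i.e. the quotient by $P\sim Q$ iff $RP=RQ$ for some nonzero $R$ (rational polynomials). Polynomial functions form a quasi-ring under pointwise addition ($\max$) and multiplication. *)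

theory Defs
  imports "HOL-Library.Poly_Mapping" "HOL-Computational_Algebra.Polynomial"
begin

definition qle :: "'a::plus \<Rightarrow> 'a \<Rightarrow> bool" where
  "qle u v \<longleftrightarrow> u + v = v"

definition quasi_field_char1 :: "'a::comm_semiring_1 itself \<Rightarrow> bool" where
  "quasi_field_char1 _ \<longleftrightarrow> (1 + 1 = (1::'a)) \<and> (\<forall>x::'a. x \<noteq> 0 \<longrightarrow> (\<exists>y. x * y = 1))"

definition totally_ordered_qf :: "'a::plus itself \<Rightarrow> bool" where
  "totally_ordered_qf _ \<longleftrightarrow> (\<forall>u v::'a. qle u v \<or> qle v u)"

definition is_qroot :: "'a::comm_semiring_1 poly \<Rightarrow> 'a \<Rightarrow> bool" where
  "is_qroot p x \<longleftrightarrow> poly p x = 0 \<or>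
     (\<exists>i j. i \<noteq> j \<and> i \<le> degree p \<and> j \<le> degree p \<and> coeff p i \<noteq> 0 \<and> coeff p j \<noteq> 0 \<and>
        (\<forall>k \<le> degree p. coeff p k \<noteq> 0 \<longrightarrow>
            qle (coeff p k * x ^ k) (coeff p i * x ^ i) \<and> qle (coeff p k * x ^ k) (coeff p j * x ^ j)))"

definition alg_closed_qf :: "'a::comm_semiring_1 itself \<Rightarrow> bool" where
  "alg_closed_qf _ \<longleftrightarrow> (\<forall>p :: 'a poly. degree p > 0 \<longrightarrow> (\<exists>x. is_qroot p x))"

text \<open>Polynomials in the variables indexed by the finite type 'n: finitely supported maps
  from monomials (exponent vectors) to coefficients. Evaluation at a point of K^n.\<close>
definition mpeval :: "(('n::finite \<Rightarrow>\<^sub>0 nat) \<Rightarrow>\<^sub>0 'a::comm_semiring_1) \<Rightarrow> ('n \<Rightarrow> 'a) \<Rightarrow> 'a" where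
  "mpeval P x = (\<Sum>m\<in>Poly_Mapping.keys P. Poly_Mapping.lookup P m * (\<Prod>i\<in>(UNIV::'n set). x i ^ Poly_Mapping.lookup (m::'n \<Rightarrow>\<^sub>0 nat) i))"

text \<open>The congruence defining K{X}: P ~ Q iff R P = R Q for some nonzero R.\<close>
definition rat_equiv :: "(('n \<Rightarrow>\<^sub>0 nat) \<Rightarrow>\<^sub>0 'a::comm_semiring_1) \<Rightarrow> (('n \<Rightarrow>\<^sub>0 nat) \<Rightarrow>\<^sub>0 'a) \<Rightarrow> bool" where
  "rat_equiv P Q \<longleftrightarrow> (\<exists>R. R \<noteq> 0 \<and> R * P = R * Q)"

end

theory Submission
  imports Defs
begin

context
  fixes dummy :: "'b::comm_semiring_1 itself"
  assumes idem1: "(1::'b) + 1 = 1"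
begin

lemma idem: "(x::'b) + x = x"
proof -
  have "x + x = x * (1 + 1)" by (metis distrib_left mult.right_neutral)
  thus ?thesis using idem1 by simp
qed

lemma qle_refl: "qle (x::'b) x" by (simp add: qle_def idem)

lemma qle_trans: "qle (u::'b) v \<Longrightarrow> qle v w \<Longrightarrow> qle u w"
  unfolding qle_def by (metis add.assoc)

lemma qle_antisym: "qle (u::'b) v \<Longrightarrow> qle v u \<Longrightarrow> u = v"
  unfolding qle_def by (metis add.commute)

lemma qle_addL: "qle (u::'b) (u + v)"
  unfolding qle_def by (metis add.assoc idem)

lemma qle_addR: "qle (v::'b) (u + v)"
  unfolding qle_def by (metis add.commute add.left_commute idem)

lemma qle_add_bound: "qle (u::'b) w \<Longrightarrow> qle v w \<Longrightarrow> qle (u + v) w"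
  unfolding qle_def by (metis add.assoc)

lemma qle_add_mono: "qle (u::'b) u' \<Longrightarrow> qle v v' \<Longrightarrow> qle (u + v) (u' + v')"
  by (meson qle_add_bound qle_addL qle_addR qle_trans)

lemma qle_zero: "qle 0 (u::'b)" by (simp add: qle_def)

lemma qle_mult: "qle (u::'b) v \<Longrightarrow> qle (u * w) (v * w)"
  unfolding qle_def by (metis distrib_right)

lemma qle_mult2: "qle (u::'b) v \<Longrightarrow> qle u' v' \<Longrightarrow> qle (u * u') (v * v')"
  by (metis mult.commute qle_mult qle_trans)

lemma qle_power: "qle (u::'b) v \<Longrightarrow> qle (u ^ n) (v ^ n)"
  by (induction n) (auto simp: qle_refl intro: qle_mult2)

lemma qle_sum_bound: "finite S \<Longrightarrow> (\<And>s. s \<in> S \<Longrightarrow> qle (f s) (w::'b)) \<Longrightarrow> qle (sum f S) w"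
  by (induction S rule: finite_induct) (auto simp: qle_zero intro: qle_add_bound)

lemma qle_sum_member: "finite S \<Longrightarrow> s \<in> S \<Longrightarrow> qle (f s) (sum f S :: 'b)"
  by (metis qle_addL qle_addR sum.remove)

lemma qle_trans_rule [trans]: "qle (u::'b) v \<Longrightarrow> qle v w \<Longrightarrow> qle u w"
  by (rule qle_trans)

lemma eq_qle_trans [trans]: "(u::'b) = v \<Longrightarrow> qle v w \<Longrightarrow> qle u w" by simp

lemma binom_trick: "(P + M) ^ Suc k = P * (P + M) ^ k + (M::'b) ^ Suc k"
proof (rule qle_antisym)
  show "qle ((P + M) ^ Suc k) (P * (P + M) ^ k + M ^ Suc k)"
  proof (induction k)
    case 0 then show ?case by (simp add: qle_refl)
  next
    case (Suc k)
    have a: "qle (M * (P + M) ^ k) ((P + M) ^ Suc k)"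
      by (simp add: qle_mult qle_addR)
    have "(P + M) ^ Suc (Suc k) = P * (P + M) ^ Suc k + M * (P + M) ^ Suc k"
      by (simp add: distrib_right)
    also have "qle \<dots> (P * (P + M) ^ Suc k + M * (P * (P + M) ^ k + M ^ Suc k))"
      by (intro qle_add_mono qle_refl) (metis Suc mult.commute qle_mult)
    also have "\<dots> = P * (P + M) ^ Suc k + P * (M * (P + M) ^ k) + M ^ Suc (Suc k)"
      by (simp add: distrib_left algebra_simps)
    also have "qle \<dots> (P * (P + M) ^ Suc k + M ^ Suc (Suc k))"
      by (intro qle_add_mono qle_add_bound qle_refl) (metis a mult.commute qle_mult)
    finally show ?case .
  qed
  show "qle (P * (P + M) ^ k + M ^ Suc k) ((P + M) ^ Suc k)"
    by (intro qle_add_bound) (simp_all add: qle_mult qle_addL, metis power_Suc qle_addR qle_power)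
qed

lemma absorb: "qle (M ^ Suc k) (P ^ Suc k) \<Longrightarrow> (P + M) ^ k * (P + M) = (P + M) ^ k * (P::'b)"
proof -
  assume h: "qle (M ^ Suc k) (P ^ Suc k)"
  have "qle (P ^ Suc k) (P * (P + M) ^ k)"
    by (simp add: qle_mult2 qle_refl qle_power qle_addL)
  hence "qle (M ^ Suc k) (P * (P + M) ^ k)" using h qle_trans by blast
  hence "P * (P + M) ^ k + M ^ Suc k = P * (P + M) ^ k" by (simp add: qle_def add.commute)
  thus ?thesis using binom_trick[of P M k] by (simp add: mult.commute)
qed

end

locale qf =
  fixes K :: "'a::comm_semiring_1 itself"
  assumes one_one: "(1::'a) + 1 = 1"
    and inv_ex: "\<And>x::'a. x \<noteq> 0 \<Longrightarrow> \<exists>y. x * y = 1"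
    and tot: "\<And>u v::'a. qle u v \<or> qle v u"
    and inf: "infinite (UNIV :: 'a set)"
    and roots: "\<And>(g::'a) n. g \<noteq> 0 \<Longrightarrow> n > 0 \<Longrightarrow> \<exists>r. r ^ n = g"
begin

definition qlt :: "'a \<Rightarrow> 'a \<Rightarrow> bool" where "qlt u v \<longleftrightarrow> qle u v \<and> u \<noteq> v"

lemmas Krefl = qle_refl[OF one_one]
lemmas Ktrans = qle_trans[OF one_one]
lemmas Kantisym = qle_antisym[OF one_one]
lemmas KaddL = qle_addL[OF one_one]
lemmas KaddR = qle_addR[OF one_one]
lemmas Kadd_bound = qle_add_bound[OF one_one]
lemmas Kzero = qle_zero[OF one_one]
lemmas Kmult = qle_mult[OF one_one]
lemmas Kmult2 = qle_mult2[OF one_one]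
lemmas Kpower = qle_power[OF one_one]
lemmas Ksum_bound = qle_sum_bound[OF one_one]
lemmas Ksum_member = qle_sum_member[OF one_one]

lemma not_qle: "\<not> qle (u::'a) v \<Longrightarrow> qlt v u"
  using tot unfolding qlt_def by (metis Krefl)

lemma qlt_qle: "qlt (u::'a) v \<Longrightarrow> qle u v" by (simp add: qlt_def)

lemma qlt_not_qle: "qlt u v \<longleftrightarrow> \<not> qle v u"
  using Kantisym not_qle qlt_def by blast

lemma qlt_trans1: "qlt u v \<Longrightarrow> qle v w \<Longrightarrow> qlt u w"
  by (meson Ktrans qlt_not_qle)

lemma qlt_trans2: "qle u v \<Longrightarrow> qlt v w \<Longrightarrow> qlt u w"
  by (meson Ktrans qlt_not_qle)

lemma qle_0_iff: "qle (u::'a) 0 \<longleftrightarrow> u = 0"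
  by (simp add: qle_def)

lemma add_cases: "u + v = u \<or> u + v = (v::'a)"
  using tot[of u v] unfolding qle_def by (auto simp: add.commute)

lemma qle_add_iff: "qle (w::'a) (u + v) \<longleftrightarrow> qle w u \<or> qle w v"
proof -
  have a: "qle u (u + v)" "qle v (u + v)" by (rule KaddL, rule KaddR)
  show ?thesis using add_cases[of u v] a Ktrans[of w v "u + v"] Ktrans[of w u "u + v"] by auto
qed

lemma add_eq0: "(u::'a) + v = 0 \<longleftrightarrow> u = 0 \<and> (v::'a) = 0"
  using add_cases[of u v] by auto

lemma mult_eq0: "(u::'a) * v = 0 \<longleftrightarrow> u = 0 \<or> v = 0"
proof
  assume h: "u * v = 0"
  show "u = 0 \<or> v = 0"
  proof (rule ccontr)
    assume "\<not> (u = 0 \<or> v = 0)"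
    then obtain y where "u * y = 1" using inv_ex by blast
    hence "v = y * (u * v)" by (simp add: mult.assoc[symmetric] mult.commute[of y u])
    thus False using h \<open>\<not> (u = 0 \<or> v = 0)\<close> by simp
  qed
qed auto

lemma cancel: "(w::'a) \<noteq> 0 \<Longrightarrow> u * w = v * w \<Longrightarrow> u = v"
proof -
  assume w: "w \<noteq> 0" and e: "u * w = v * w"
  obtain y where y: "w * y = 1" using inv_ex w by blast
  have "u * w * y = v * w * y" using e by simp
  thus "u = v" using y by (simp add: mult.assoc)
qed

lemma qle_cancel: "(w::'a) \<noteq> 0 \<Longrightarrow> qle (u * w) (v * w) \<Longrightarrow> qle u v"
proof -
  assume w: "w \<noteq> 0" and e: "qle (u * w) (v * w)"
  obtain y where y: "w * y = 1" using inv_ex w by blast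
  have "qle (u * w * y) (v * w * y)" using e by (rule Kmult)
  thus "qle u v" using y by (simp add: mult.assoc)
qed

lemma qle_mult_iff: "(w::'a) \<noteq> 0 \<Longrightarrow> qle (u * w) (v * w) \<longleftrightarrow> qle u v"
  using qle_cancel Kmult by blast

lemma qlt_mult_iff: "(w::'a) \<noteq> 0 \<Longrightarrow> qlt (u * w) (v * w) \<longleftrightarrow> qlt u v"
  by (simp add: qlt_not_qle qle_mult_iff)

lemma qlt_mult2: "qlt u v \<Longrightarrow> qle u' v' \<Longrightarrow> u' \<noteq> 0 \<Longrightarrow> qlt (u * u') (v * v')"
  by (metis Kmult mult.commute qlt_mult_iff qlt_trans1)

lemma power_nz: "(u::'a) \<noteq> 0 \<Longrightarrow> u ^ n \<noteq> 0"
  by (induction n) (auto simp: mult_eq0)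

lemma qlt_power: "qlt u v \<Longrightarrow> n > 0 \<Longrightarrow> qlt (u ^ n) (v ^ n)"
proof (induction n)
  case 0 then show ?case by simp
next
  case (Suc n)
  show ?case
  proof (cases "n = 0")
    case True then show ?thesis using Suc by simp
  next
    case False
    hence ih: "qlt (u ^ n) (v ^ n)" using Suc by simp
    show ?thesis
    proof (cases "u = 0")
      case True
      have "v \<noteq> 0" using Suc.prems True qlt_def qle_0_iff by auto
      then show ?thesis using True power_nz[of v "Suc n"] by (simp add: qlt_def Kzero)
    next
      case False
      have "qlt (u ^ n * u) (v ^ n * v)"
        using qlt_mult2[OF ih qlt_qle[OF Suc.prems(1)] False] .
      thus ?thesis by (simp add: mult.commute)
    qed
  qed
qed

lemma qle_power_cancel: "n > 0 \<Longrightarrow> qle ((u::'a) ^ n) (v ^ n) \<Longrightarrow> qle u v"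
  by (meson qlt_not_qle qlt_power)

lemma power_inj: "n > 0 \<Longrightarrow> u ^ n = v ^ n \<Longrightarrow> (u::'a) = v"
  by (metis Kantisym Krefl qle_power_cancel)

lemma sum_nz: "finite S \<Longrightarrow> s \<in> S \<Longrightarrow> f s \<noteq> 0 \<Longrightarrow> sum f S \<noteq> (0::'a)"
  by (metis Ksum_member qle_0_iff)

lemma sum_eq0: "finite S \<Longrightarrow> sum f S = (0::'a) \<longleftrightarrow> (\<forall>s\<in>S. f s = 0)"
  using sum_nz[of S _ f] by auto

lemma qle_sum_exists: "finite S \<Longrightarrow> (w::'a) \<noteq> 0 \<Longrightarrow> qle w (sum f S) \<Longrightarrow> \<exists>s\<in>S. qle w (f s)"
proof (induction S rule: finite_induct)
  case empty then show ?case by (simp add: qle_0_iff)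
next
  case (insert x F) then show ?case by (auto simp: qle_add_iff)
qed

lemma qlt_sum: "finite S \<Longrightarrow> (w::'a) \<noteq> 0 \<Longrightarrow> (\<And>s. s \<in> S \<Longrightarrow> qlt (f s) w) \<Longrightarrow> qlt (sum f S) w"
  by (meson qle_sum_exists qlt_not_qle)

lemma prod_nz: "finite S \<Longrightarrow> (\<And>s. s \<in> S \<Longrightarrow> f s \<noteq> 0) \<Longrightarrow> prod f S \<noteq> (0::'a)"
  by (induction S rule: finite_induct) (auto simp: mult_eq0)

lemma prod_mono: "(\<And>s. s \<in> S \<Longrightarrow> qle (f s) (g s)) \<Longrightarrow> qle (prod f S) (prod g S :: 'a)"
  by (induction S rule: infinite_finite_induct) (auto simp: Krefl intro: Kmult2)

lemma exists_small: "\<exists>s::'a. s \<noteq> 0 \<and> qlt s 1"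
proof -
  have "\<not> UNIV \<subseteq> {0::'a, 1}" using inf finite_subset by auto
  then obtain g :: 'a where g: "g \<noteq> 0" "g \<noteq> 1" by blast
  show ?thesis
  proof (cases "qle g 1")
    case True then show ?thesis using g by (auto simp: qlt_def)
  next
    case False
    obtain h where h: "g * h = 1" using inv_ex g by blast
    have "h \<noteq> 0" using h by auto
    have "qlt (1 * h) (g * h)" using not_qle[OF False] \<open>h \<noteq> 0\<close> qlt_mult_iff by blast
    thus ?thesis using h \<open>h \<noteq> 0\<close> by auto
  qed
qed

lemma exists_below: "u \<noteq> 0 \<Longrightarrow> \<exists>t::'a. t \<noteq> 0 \<and> qlt t u"
  by (metis exists_small mult_1 mult_eq0 qlt_mult_iff)

lemma exists_above: "\<exists>t::'a. t \<noteq> 0 \<and> qlt (u::'a) t"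
proof -
  obtain s where s: "s \<noteq> 0" "qlt s 1" using exists_small by blast
  obtain y where y: "s * y = 1" using inv_ex s by blast
  have y0: "y \<noteq> 0" using y by auto
  have "qlt (s * (u + 1) * y) (1 * (u + 1) * y)"
    using s y0 by (metis add_eq0 mult_eq0 one_neq_zero qlt_mult_iff)
  moreover have "s * (u + 1) * y = (s * y) * (u + 1)" by (simp add: ac_simps)
  ultimately have "qlt (u + 1) ((u + 1) * y)" using y by simp
  moreover have "(u + 1) * y \<noteq> 0" using y0 by (simp add: mult_eq0 add_eq0)
  ultimately show ?thesis using KaddL qlt_trans2 by blast
qed

lemma between: "qlt l u \<Longrightarrow> \<exists>t::'a. t \<noteq> 0 \<and> qlt l t \<and> qlt t u"
proof (cases "l = 0")
  case True
  assume "qlt l u"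
  hence "u \<noteq> 0" using True qlt_def by auto
  then obtain t where "t \<noteq> 0" "qlt t u" using exists_below by blast
  thus ?thesis using True by (auto simp: qlt_def Kzero)
next
  case False
  assume h: "qlt l u"
  have u0: "u \<noteq> 0" using h qle_0_iff qlt_def by auto
  have lu: "l * u \<noteq> 0" using False u0 by (simp add: mult_eq0)
  obtain r where r: "r ^ 2 = l * u" using roots[OF lu, of 2] by auto
  have r0: "r \<noteq> 0" using r lu by auto
  have "qlt (l * l) (u * l)" using h False qlt_mult_iff by blast
  hence "qlt (l ^ 2) (r ^ 2)" using r by (simp add: power2_eq_square mult.commute)
  hence "\<not> qle (r ^ 2) (l ^ 2)" by (simp add: qlt_not_qle)
  hence 1: "qlt l r" using qle_power[OF one_one, of r l 2] qlt_not_qle by blast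
  have "qlt (l * u) (u * u)" using h u0 qlt_mult_iff by blast
  hence "qlt (r ^ 2) (u ^ 2)" using r by (simp add: power2_eq_square)
  hence "\<not> qle (u ^ 2) (r ^ 2)" by (simp add: qlt_not_qle)
  hence 2: "qlt r u" using qle_power[OF one_one, of u r 2] qlt_not_qle by blast
  show ?thesis using 1 2 r0 by blast
qed

lemma finite_max: "finite S \<Longrightarrow> S \<noteq> {} \<Longrightarrow> \<exists>s\<in>S. \<forall>s'\<in>S. qle (f s') (f s :: 'a)"
proof (induction S rule: finite_ne_induct)
  case (singleton x) then show ?case by (simp add: Krefl)
next
  case (insert x F)
  then obtain s where s: "s \<in> F" "\<forall>s'\<in>F. qle (f s') (f s)" by blast
  show ?case
  proof (cases "qle (f x) (f s)")
    case True then show ?thesis using s by auto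
  next
    case False
    hence "qle (f s) (f x)" using tot by blast
    then show ?thesis using s Ktrans[of _ "f s" "f x"] Krefl by auto
  qed
qed

lemma finite_min: "finite S \<Longrightarrow> S \<noteq> {} \<Longrightarrow> \<exists>s\<in>S. \<forall>s'\<in>S. qle (f s :: 'a) (f s')"
proof (induction S rule: finite_ne_induct)
  case (singleton x) then show ?case by (simp add: Krefl)
next
  case (insert x F)
  then obtain s where s: "s \<in> F" "\<forall>s'\<in>F. qle (f s) (f s')" by blast
  show ?case
  proof (cases "qle (f s) (f x)")
    case True then show ?thesis using s by auto
  next
    case False
    hence "qle (f x) (f s)" using tot by blast
    then show ?thesis using s Ktrans[of "f x" "f s"] Krefl by auto
  qed
qed

end

context qf begin

lemma qlt_0: "x \<noteq> 0 \<Longrightarrow> qlt 0 (x::'a)"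
  by (simp add: qlt_def Kzero)

lemma oneD:
  assumes S: "finite S" and c: "(c::'a) \<noteq> 0"
    and H: "\<And>t. t \<noteq> 0 \<Longrightarrow> qle (c * t ^ a) (\<Sum>s\<in>S. d s * t ^ e s)"
  shows "(\<exists>s\<in>S. e s = a \<and> qle c (d s)) \<or>
         (\<exists>s\<in>S. \<exists>s'\<in>S. e s < a \<and> a < e s' \<and>
            qle (c ^ (e s' - e s)) (d s ^ (e s' - a) * d s' ^ (a - e s)))"
proof (rule ccontr)
  assume "\<not> ?thesis"
  hence N1: "\<And>s. s \<in> S \<Longrightarrow> e s = a \<Longrightarrow> qlt (d s) c"
    and N2: "\<And>s s'. s \<in> S \<Longrightarrow> s' \<in> S \<Longrightarrow> e s < a \<Longrightarrow> a < e s' \<Longrightarrow>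
               qlt (d s ^ (e s' - a) * d s' ^ (a - e s)) (c ^ (e s' - e s))"
    using not_qle by blast+
  obtain ci where ci: "c * ci = 1" using inv_ex c by blast
  define Lo where "Lo = {s\<in>S. e s < a \<and> d s \<noteq> 0}"
  define Up where "Up = {s\<in>S. a < e s \<and> d s \<noteq> 0}"
  define l where "l s = (SOME r. r ^ (a - e s) * c = d s)" for s
  define u where "u s = (SOME r. r ^ (e s - a) * d s = c)" for s
  have l: "l s ^ (a - e s) * c = d s" if "s \<in> Lo" for s
  proof -
    have "d s \<noteq> 0" "ci \<noteq> 0" using that ci by (auto simp: Lo_def)
    hence "d s * ci \<noteq> 0" by (simp add: mult_eq0)
    moreover have "a - e s > 0" using that Lo_def by auto
    ultimately obtain r where "r ^ (a - e s) = d s * ci" using roots by blast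
    hence "r ^ (a - e s) * c = d s * (c * ci)" by (simp add: ac_simps)
    hence "r ^ (a - e s) * c = d s" using ci by simp
    thus ?thesis unfolding l_def by (rule someI)
  qed
  have u: "u s ^ (e s - a) * d s = c" if "s \<in> Up" for s
  proof -
    have "d s \<noteq> 0" using that Up_def by auto
    then obtain y where y: "d s * y = 1" using inv_ex by blast
    have "c * y \<noteq> 0" using c y by (auto simp: mult_eq0)
    moreover have "e s - a > 0" using that Up_def by auto
    ultimately obtain r where "r ^ (e s - a) = c * y" using roots by blast
    hence "r ^ (e s - a) * d s = c * (d s * y)" by (simp add: ac_simps)
    hence "r ^ (e s - a) * d s = c" using y by simp
    thus ?thesis unfolding u_def by (rule someI)
  qed
  have u0: "u s \<noteq> 0" if "s \<in> Up" for s
  proof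
    assume "u s = 0"
    moreover have "e s - a > 0" using that Up_def by auto
    ultimately have "u s ^ (e s - a) * d s = 0" by (simp add: zero_power)
    thus False using u[OF that] c by simp
  qed
  have lu: "qlt (l s) (u s')" if s: "s \<in> Lo" and s': "s' \<in> Up" for s s'
  proof (rule ccontr)
    assume "\<not> qlt (l s) (u s')"
    hence le: "qle (u s') (l s)" using not_qle by blast
    define p where "p = a - e s"
    define q where "q = e s' - a"
    have lp: "l s ^ p * c = d s" using l[OF s] p_def by simp
    have uq: "u s' ^ q * d s' = c" using u[OF s'] q_def by simp
    have "qle ((u s' ^ q) ^ p) ((l s ^ p) ^ q)"
      using Kpower[OF le, of "p * q"] by (simp add: power_mult[symmetric] mult.commute)
    hence "qle ((u s' ^ q) ^ p * d s' ^ p * c ^ q) ((l s ^ p) ^ q * c ^ q * d s' ^ p)"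
    proof -
      assume h: "qle ((u s' ^ q) ^ p) ((l s ^ p) ^ q)"
      have "qle ((u s' ^ q) ^ p * (d s' ^ p * c ^ q)) ((l s ^ p) ^ q * (d s' ^ p * c ^ q))"
        by (rule Kmult[OF h])
      thus ?thesis by (simp add: ac_simps)
    qed
    hence "qle ((u s' ^ q * d s') ^ p * c ^ q) ((l s ^ p * c) ^ q * d s' ^ p)"
      by (simp add: power_mult_distrib)
    hence "qle (c ^ p * c ^ q) (d s ^ q * d s' ^ p)" using lp uq by simp
    hence "qle (c ^ (e s' - e s)) (d s ^ (e s' - a) * d s' ^ (a - e s))"
      using s s' unfolding p_def q_def Lo_def Up_def by (simp add: power_add[symmetric])
    moreover have "qlt (d s ^ (e s' - a) * d s' ^ (a - e s)) (c ^ (e s' - e s))"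
      using N2 s s' unfolding Lo_def Up_def by auto
    ultimately show False using qlt_not_qle by blast
  qed
  have fin: "finite Lo" "finite Up" using S by (auto simp: Lo_def Up_def)
  obtain t where t0: "t \<noteq> 0" and tl: "\<And>s. s \<in> Lo \<Longrightarrow> qlt (l s) t"
    and tu: "\<And>s. s \<in> Up \<Longrightarrow> qlt t (u s)"
  proof -
    show ?thesis
    proof (cases "Lo = {}")
      case True
      show ?thesis
      proof (cases "Up = {}")
        case True
        show ?thesis using that[of 1] \<open>Lo = {}\<close> True by auto
      next
        case False
        obtain m where m: "m \<in> Up" "\<forall>s\<in>Up. qle (u m) (u s)" using finite_min[OF fin(2) False] by blast
        obtain t where "t \<noteq> 0" "qlt t (u m)" using exists_below u0 m by blast
        thus ?thesis using that[of t] \<open>Lo = {}\<close> m qlt_trans1 by blast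
      qed
    next
      case LF: False
      obtain M where M: "M \<in> Lo" "\<forall>s\<in>Lo. qle (l s) (l M)" using finite_max[OF fin(1) LF] by blast
      show ?thesis
      proof (cases "Up = {}")
        case True
        obtain t where "t \<noteq> 0" "qlt (l M) t" using exists_above by blast
        thus ?thesis using that[of t] True M qlt_trans2 by blast
      next
        case False
        obtain m where m: "m \<in> Up" "\<forall>s\<in>Up. qle (u m) (u s)" using finite_min[OF fin(2) False] by blast
        obtain t where "t \<noteq> 0" "qlt (l M) t" "qlt t (u m)" using between lu M m by blast
        thus ?thesis using that[of t] M m qlt_trans1 qlt_trans2 by blast
      qed
    qed
  qed
  have ct: "c * t ^ a \<noteq> 0" using c t0 by (simp add: mult_eq0 power_nz)
  have each: "qlt (d s * t ^ e s) (c * t ^ a)" if s: "s \<in> S" for s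
  proof -
    consider "d s = 0" | "d s \<noteq> 0" "e s = a" | "d s \<noteq> 0" "e s < a" | "d s \<noteq> 0" "a < e s"
    proof (cases "d s = 0")
      case False
      then show ?thesis using that(2-4) less_linear[of "e s" a] by auto
    qed (rule that(1))
    then show ?thesis
    proof cases
      case 1 then show ?thesis using ct qlt_0 by simp
    next
      case 2 then show ?thesis using N1[OF s] qlt_mult_iff[OF power_nz[OF t0]] by simp
    next
      case 3
      hence sL: "s \<in> Lo" using s Lo_def by auto
      have "qlt (l s ^ (a - e s)) (t ^ (a - e s))" using qlt_power tl[OF sL] 3 by simp
      hence "qlt (l s ^ (a - e s) * (c * t ^ e s)) (t ^ (a - e s) * (c * t ^ e s))"
        using qlt_mult_iff[of "c * t ^ e s"] c t0 by (simp add: power_nz mult_eq0)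
      moreover have "l s ^ (a - e s) * (c * t ^ e s) = d s * t ^ e s"
      proof -
        have "l s ^ (a - e s) * (c * t ^ e s) = (l s ^ (a - e s) * c) * t ^ e s"
          by (simp add: ac_simps)
        thus ?thesis using l[OF sL] by simp
      qed
      moreover have "t ^ (a - e s) * (c * t ^ e s) = c * t ^ a"
      proof -
        have "t ^ (a - e s) * t ^ e s = t ^ a" using 3 by (simp flip: power_add)
        thus ?thesis by (metis mult.left_commute)
      qed
      ultimately show ?thesis by (simp only:)
    next
      case 4
      hence sU: "s \<in> Up" using s Up_def by auto
      have "qlt (t ^ (e s - a)) (u s ^ (e s - a))" using qlt_power[OF tu[OF sU]] 4 by simp
      hence "qlt (t ^ (e s - a) * (d s * t ^ a)) (u s ^ (e s - a) * (d s * t ^ a))"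
        using qlt_mult_iff[of "d s * t ^ a"] 4 t0 by (simp add: power_nz mult_eq0)
      moreover have "u s ^ (e s - a) * (d s * t ^ a) = c * t ^ a"
      proof -
        have "u s ^ (e s - a) * (d s * t ^ a) = (u s ^ (e s - a) * d s) * t ^ a"
          by (simp add: ac_simps)
        thus ?thesis using u[OF sU] by simp
      qed
      moreover have "t ^ (e s - a) * (d s * t ^ a) = d s * t ^ e s"
      proof -
        have "t ^ (e s - a) * t ^ a = t ^ e s" using 4 by (simp flip: power_add)
        thus ?thesis by (metis mult.left_commute)
      qed
      ultimately show ?thesis by (simp only:)
    qed
  qed
  have "qlt (\<Sum>s\<in>S. d s * t ^ e s) (c * t ^ a)" by (rule qlt_sum[OF S ct]) (rule each)
  thus False using H[OF t0] by (simp add: qlt_not_qle)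
qed

end

definition mmono :: "('n::finite \<Rightarrow>\<^sub>0 nat) \<Rightarrow> ('n \<Rightarrow> 'a::comm_semiring_1) \<Rightarrow> 'a" where
  "mmono m x = (\<Prod>i\<in>UNIV. x i ^ Poly_Mapping.lookup m i)"

lemma mpeval_mmono: "mpeval P x = (\<Sum>m\<in>Poly_Mapping.keys P. Poly_Mapping.lookup P m * mmono m x)"
  by (simp add: mpeval_def mmono_def)

lemma mpeval_superset:
  assumes "finite S" "Poly_Mapping.keys P \<subseteq> S"
  shows "mpeval P x = (\<Sum>m\<in>S. Poly_Mapping.lookup P m * mmono m x)"
  unfolding mpeval_mmono
  by (rule sum.mono_neutral_left[OF assms(1) assms(2)]) (simp add: in_keys_iff)

lemma mpeval_add: "mpeval (P + Q) x = mpeval P x + mpeval Q x"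
proof -
  let ?S = "Poly_Mapping.keys P \<union> Poly_Mapping.keys Q"
  have f: "finite ?S" by simp
  have "mpeval (P + Q) x = (\<Sum>m\<in>?S. Poly_Mapping.lookup (P + Q) m * mmono m x)"
    by (rule mpeval_superset[OF f keys_add])
  also have "\<dots> = (\<Sum>m\<in>?S. Poly_Mapping.lookup P m * mmono m x) + (\<Sum>m\<in>?S. Poly_Mapping.lookup Q m * mmono m x)"
    by (simp add: lookup_add distrib_right sum.distrib)
  also have "\<dots> = mpeval P x + mpeval Q x"
    using mpeval_superset[OF f, of P x] mpeval_superset[OF f, of Q x] by simp
  finally show ?thesis .
qed

lemma mpeval_zero: "mpeval 0 x = 0"
  by (simp add: mpeval_def)

lemma mpeval_single: "mpeval (Poly_Mapping.single m c) x = c * mmono m x"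
  by (simp add: mpeval_mmono)

lemma mpeval_sum: "mpeval (sum f S) x = (\<Sum>s\<in>S. mpeval (f s) x)"
  by (induction S rule: infinite_finite_induct) (simp_all add: mpeval_zero mpeval_add)

lemma poly_sum_singles: "P = (\<Sum>m\<in>Poly_Mapping.keys P. Poly_Mapping.single m (Poly_Mapping.lookup P m))"
proof (rule poly_mapping_eqI)
  fix k
  show "Poly_Mapping.lookup P k = Poly_Mapping.lookup (\<Sum>m\<in>Poly_Mapping.keys P. Poly_Mapping.single m (Poly_Mapping.lookup P m)) k"
  proof (cases "k \<in> Poly_Mapping.keys P")
    case True
    have "Poly_Mapping.lookup (\<Sum>m\<in>Poly_Mapping.keys P. Poly_Mapping.single m (Poly_Mapping.lookup P m)) k
       = (\<Sum>m\<in>Poly_Mapping.keys P. Poly_Mapping.lookup (Poly_Mapping.single m (Poly_Mapping.lookup P m)) k)" by (simp add: lookup_sum)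
    also have "\<dots> = Poly_Mapping.lookup (Poly_Mapping.single k (Poly_Mapping.lookup P k)) k"
      by (rule sum.remove[OF finite_keys True, THEN trans]) (simp add: lookup_single_not_eq)
    finally show ?thesis by simp
  next
    case False
    have "Poly_Mapping.lookup (\<Sum>m\<in>Poly_Mapping.keys P. Poly_Mapping.single m (Poly_Mapping.lookup P m)) k
       = (\<Sum>m\<in>Poly_Mapping.keys P. Poly_Mapping.lookup (Poly_Mapping.single m (Poly_Mapping.lookup P m)) k)" by (simp add: lookup_sum)
    also have "\<dots> = 0" using False by (intro sum.neutral ballI lookup_single_not_eq) auto
    finally show ?thesis using False by (simp add: in_keys_iff)
  qed
qed

lemma mmono_add: "mmono (m + m') x = mmono m x * mmono m' x"
  by (simp add: mmono_def lookup_add power_add prod.distrib)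

lemma mmono_zero: "mmono 0 x = 1"
  by (simp add: mmono_def)

lemma mpeval_mult: "mpeval (P * Q) x = mpeval P x * mpeval Q x"
proof -
  let ?s = "\<lambda>P m. Poly_Mapping.single m (Poly_Mapping.lookup P m)"
  have "P * Q = (\<Sum>m\<in>Poly_Mapping.keys P. ?s P m) * (\<Sum>m'\<in>Poly_Mapping.keys Q. ?s Q m')"
    using poly_sum_singles[of P] poly_sum_singles[of Q] by simp
  also have "\<dots> = (\<Sum>m\<in>Poly_Mapping.keys P. \<Sum>m'\<in>Poly_Mapping.keys Q. ?s P m * ?s Q m')"
    by (rule sum_product)
  finally have e: "P * Q = (\<Sum>m\<in>Poly_Mapping.keys P. \<Sum>m'\<in>Poly_Mapping.keys Q. ?s P m * ?s Q m')" .
  have "mpeval (P * Q) x = (\<Sum>m\<in>Poly_Mapping.keys P. \<Sum>m'\<in>Poly_Mapping.keys Q. mpeval (?s P m * ?s Q m') x)"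
    unfolding e by (simp add: mpeval_sum)
  also have "\<dots> = (\<Sum>m\<in>Poly_Mapping.keys P. \<Sum>m'\<in>Poly_Mapping.keys Q. (Poly_Mapping.lookup P m * mmono m x) * (Poly_Mapping.lookup Q m' * mmono m' x))"
    by (simp add: mult_single mpeval_single mmono_add ac_simps)
  also have "\<dots> = mpeval P x * mpeval Q x"
    by (simp add: mpeval_mmono sum_product)
  finally show ?thesis .
qed

lemma mpeval_one: "mpeval 1 x = 1"
  by (simp add: mpeval_mmono mmono_zero)

context qf begin

lemma mmono_nz: "(\<And>i. x i \<noteq> 0) \<Longrightarrow> mmono m (x::'n::finite \<Rightarrow> 'a) \<noteq> 0"
  unfolding mmono_def by (rule prod_nz) (auto simp: power_nz)

lemma mpeval_nz: "(\<And>i. x i \<noteq> 0) \<Longrightarrow> P \<noteq> 0 \<Longrightarrow> mpeval P (x::'n::finite \<Rightarrow> 'a) \<noteq> 0"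
proof -
  assume x: "\<And>i. x i \<noteq> 0" and P: "P \<noteq> 0"
  have "Poly_Mapping.keys P \<noteq> {}" using P by simp
  then obtain m where m: "m \<in> Poly_Mapping.keys P" by blast
  have "Poly_Mapping.lookup P m \<noteq> 0" using m by (simp add: in_keys_iff)
  hence "Poly_Mapping.lookup P m * mmono m x \<noteq> 0"
    using mmono_nz[OF x] by (simp add: mult_eq0)
  thus ?thesis unfolding mpeval_mmono by (rule sum_nz[OF finite_keys m])
qed

lemma exists_t: "A \<noteq> 0 \<Longrightarrow> \<exists>t::'a. t \<noteq> 0 \<and> qle t 1 \<and> qlt (t * B) A"
proof -
  assume A: "A \<noteq> 0"
  have AB: "A + B \<noteq> 0" using A by (simp add: add_eq0)
  obtain w where w: "(A + B) * w = 1" using inv_ex AB by blast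
  have w0: "w \<noteq> 0" using w by auto
  obtain s where s: "s \<noteq> 0" "qlt s 1" using exists_small by blast
  define r where "r = A * w"
  have r0: "r \<noteq> 0" using A w0 by (simp add: r_def mult_eq0)
  have r1: "qle r 1" unfolding r_def using Kmult[OF KaddL[of A B], of w] w by simp
  have rB: "qle (r * B) A"
  proof -
    have "qle (B * r) ((A + B) * r)" by (rule Kmult[OF KaddR])
    moreover have "(A + B) * r = A * ((A + B) * w)" by (simp add: r_def ac_simps)
    ultimately show ?thesis using w by (simp add: mult.commute)
  qed
  have "qlt (s * (r * B)) A"
  proof (cases "r * B = 0")
    case True then show ?thesis using qlt_0[OF A] by simp
  next
    case False then show ?thesis using qlt_mult2[OF s(2) rB False] by simp
  qed
  moreover have "qle (r * s) (1 * 1)" using Kmult2[OF r1 qlt_qle[OF s(2)]] .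
  ultimately show ?thesis using r0 s(1)
    by (intro exI[of _ "r * s"]) (simp add: mult_eq0 ac_simps)
qed

lemma extend:
  fixes P Q :: "('n::finite \<Rightarrow>\<^sub>0 nat) \<Rightarrow>\<^sub>0 'a"
  assumes G: "\<And>y. (\<And>i. y i \<noteq> 0) \<Longrightarrow> qle (mpeval P y) (mpeval Q y)"
  shows "qle (mpeval P x) (mpeval Q x)"
proof (rule ccontr)
  assume "\<not> ?thesis"
  hence lt: "qlt (mpeval Q x) (mpeval P x)" by (rule not_qle)
  define A where "A = mpeval P x"
  have A0: "A \<noteq> 0" using lt A_def qlt_def qle_0_iff by auto
  obtain m where m: "m \<in> Poly_Mapping.keys P" and Am: "qle A (Poly_Mapping.lookup P m * mmono m x)"
    using qle_sum_exists[OF finite_keys A0, of "\<lambda>m. Poly_Mapping.lookup P m * mmono m x"] Krefl[of A]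
    unfolding A_def mpeval_mmono by blast
  have mz: "Poly_Mapping.lookup m i = 0" if "x i = 0" for i
  proof (rule ccontr)
    assume "Poly_Mapping.lookup m i \<noteq> 0"
    hence "x i ^ Poly_Mapping.lookup m i = 0" using that by (simp add: zero_power)
    hence "mmono m x = 0" unfolding mmono_def by (intro prod_zero) auto
    thus False using Am A0 by (simp add: qle_0_iff)
  qed
  define z where "z = (\<lambda>i. if x i = 0 then 1 else x i)"
  define B where "B = mpeval Q z"
  obtain t where t0: "t \<noteq> 0" and t1: "qle t 1" and tB: "qlt (t * B) A"
    using exists_t[OF A0] by blast
  define y where "y = (\<lambda>i. if x i = 0 then t else x i)"
  have y0: "\<And>i. y i \<noteq> 0" using t0 by (simp add: y_def)
  have "mmono m y = mmono m x"
    unfolding mmono_def by (rule prod.cong) (auto simp: y_def mz)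
  hence "qle A (Poly_Mapping.lookup P m * mmono m y)" using Am by simp
  hence AP: "qle A (mpeval P y)"
    unfolding mpeval_mmono by (rule Ktrans[OF _ Ksum_member[OF finite_keys m]])
  have "qlt (mpeval Q y) A"
    unfolding mpeval_mmono
  proof (rule qlt_sum[OF finite_keys A0])
    fix q assume q: "q \<in> Poly_Mapping.keys Q"
    show "qlt (Poly_Mapping.lookup Q q * mmono q y) A"
    proof (cases "\<forall>i. x i = 0 \<longrightarrow> Poly_Mapping.lookup q i = 0")
      case True
      have "mmono q y = mmono q x"
        unfolding mmono_def by (rule prod.cong) (auto simp: y_def True)
      moreover have "qle (Poly_Mapping.lookup Q q * mmono q x) (mpeval Q x)"
        unfolding mpeval_mmono by (rule Ksum_member[OF finite_keys q])
      ultimately show ?thesis using qlt_trans2[OF _ lt] A_def by simp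
    next
      case False
      then obtain i0 where i0: "x i0 = 0" "Poly_Mapping.lookup q i0 \<noteq> 0" by blast
      define k where "k = Poly_Mapping.lookup q i0"
      have k: "k > 0" using i0 k_def by simp
      have tk: "qle (t ^ k) t"
      proof -
        have "qle (t * t ^ (k - 1)) (t * 1)"
          using Kmult[OF Kpower[OF t1, of "k - 1"], of t] by (simp add: mult.commute)
        moreover have "t * t ^ (k - 1) = t ^ k" using k by (simp flip: power_Suc)
        ultimately show ?thesis by simp
      qed
      have rem: "mmono q w = w i0 ^ k * (\<Prod>i\<in>UNIV - {i0}. w i ^ Poly_Mapping.lookup q i)" for w :: "'n \<Rightarrow> 'a"
        unfolding mmono_def k_def by (rule prod.remove) auto
      have yz: "qle (\<Prod>i\<in>UNIV - {i0}. y i ^ Poly_Mapping.lookup q i) (\<Prod>i\<in>UNIV - {i0}. z i ^ Poly_Mapping.lookup q i)"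
        by (rule prod_mono, rule Kpower) (auto simp: y_def z_def t1 Krefl)
      have "qle (mmono q y) (t * mmono q z)"
        unfolding rem using Kmult2[OF tk yz] i0 by (simp add: y_def z_def)
      hence "qle (mmono q y * Poly_Mapping.lookup Q q) (t * mmono q z * Poly_Mapping.lookup Q q)"
        by (rule Kmult)
      hence "qle (Poly_Mapping.lookup Q q * mmono q y) (t * (Poly_Mapping.lookup Q q * mmono q z))"
        by (simp add: ac_simps)
      moreover have "qle (t * (Poly_Mapping.lookup Q q * mmono q z)) (t * B)"
      proof -
        have h: "qle (Poly_Mapping.lookup Q q * mmono q z) B"
          unfolding B_def mpeval_mmono by (rule Ksum_member[OF finite_keys q])
        show ?thesis using Kmult[OF h, of t] by (simp add: mult.commute)
      qed
      ultimately show ?thesis using qlt_trans2[OF Ktrans tB] by blast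
    qed
  qed
  moreover have "qle A (mpeval Q y)" by (rule Ktrans[OF AP G[OF y0]])
  ultimately show False by (simp add: qlt_not_qle)
qed

end

primrec mpow :: "nat \<Rightarrow> ('n \<Rightarrow>\<^sub>0 nat) \<Rightarrow> ('n \<Rightarrow>\<^sub>0 nat)" where
  "mpow 0 m = 0"
| "mpow (Suc n) m = m + mpow n m"

lemma lookup_mpow: "Poly_Mapping.lookup (mpow n m) k = n * Poly_Mapping.lookup m k"
  by (induction n) (simp_all add: lookup_add)

lemma single_pow:
  "(Poly_Mapping.single m c :: ('n \<Rightarrow>\<^sub>0 nat) \<Rightarrow>\<^sub>0 'a::comm_semiring_1) ^ n
     = Poly_Mapping.single (mpow n m) (c ^ n)"
  by (induction n) (simp_all add: mult_single)

lemma mmono_mpow: "mmono (mpow n m) x = mmono m x ^ n"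
  unfolding mmono_def lookup_mpow prod_power_distrib
  by (rule prod.cong) (simp_all add: mult.commute[of n] power_mult)

lemma mpeval_power: "mpeval (P ^ n) x = mpeval P x ^ n"
  by (induction n) (simp_all add: mpeval_one mpeval_mult)

lemma mmono_upd:
  "mmono m (x(i := t)) = t ^ Poly_Mapping.lookup m i * mmono m (x(i := 1))"
proof -
  have "mmono m (x(i := t)) = (x(i := t)) i ^ Poly_Mapping.lookup m i *
          (\<Prod>j\<in>UNIV - {i}. (x(i := t)) j ^ Poly_Mapping.lookup m j)"
    unfolding mmono_def by (rule prod.remove) auto
  moreover have "mmono m (x(i := 1)) = (x(i := 1)) i ^ Poly_Mapping.lookup m i *
          (\<Prod>j\<in>UNIV - {i}. (x(i := 1)) j ^ Poly_Mapping.lookup m j)"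
    unfolding mmono_def by (rule prod.remove) auto
  moreover have "(\<Prod>j\<in>UNIV - {i}. (x(i := t)) j ^ Poly_Mapping.lookup m j)
       = (\<Prod>j\<in>UNIV - {i}. (x(i := 1)) j ^ Poly_Mapping.lookup m j)"
    by (rule prod.cong) auto
  ultimately show ?thesis by simp
qed

context qf begin

lemma poly_one_one: "(1::('n \<Rightarrow>\<^sub>0 nat) \<Rightarrow>\<^sub>0 'a) + 1 = 1"
  by (metis single_one single_add one_one)

lemmas Ptrans = qle_trans[OF poly_one_one]
lemmas Prefl = qle_refl[OF poly_one_one]
lemmas Pmult2 = qle_mult2[OF poly_one_one]
lemmas Ppower = qle_power[OF poly_one_one]
lemmas Padd_bound = qle_add_bound[OF poly_one_one]
lemmas Psum_bound = qle_sum_bound[OF poly_one_one]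
lemmas Pabsorb = absorb[OF poly_one_one]

lemma single_le: "qle (Poly_Mapping.single m (Poly_Mapping.lookup P m)) (P :: ('n \<Rightarrow>\<^sub>0 nat) \<Rightarrow>\<^sub>0 'a)"
  unfolding qle_def
proof (rule poly_mapping_eqI)
  fix k
  show "Poly_Mapping.lookup (Poly_Mapping.single m (Poly_Mapping.lookup P m) + P) k = Poly_Mapping.lookup P k"
    by (cases "k = m") (simp_all add: lookup_add lookup_single_not_eq idem[OF one_one])
qed

lemma single_qle: "qle c d \<Longrightarrow> qle (Poly_Mapping.single m c) (Poly_Mapping.single m (d::'a))"
  unfolding qle_def by (simp flip: single_add)

end

abbreviation lk where "lk \<equiv> Poly_Mapping.lookup"
abbreviation ks where "ks \<equiv> Poly_Mapping.keys"
abbreviation sng where "sng \<equiv> Poly_Mapping.single"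

lemma nat_ident:
  assumes "j < (al::nat)" "al < k"
  shows "(k - al) * j + (al - j) * k = al * (k - j)"
proof -
  obtain p where p: "k = al + p" using assms(2) less_imp_add_positive by blast
  obtain q where q: "al = j + q" using assms(1) less_imp_add_positive by blast
  show ?thesis unfolding p q by (simp add: algebra_simps)
qed

lemma pow_alg:
  "((A * y ^ j) ^ p * (B * y ^ k) ^ q) ^ e = (A ^ p * B ^ q) ^ e * (y::'a::comm_semiring_1) ^ (e * (p * j + q * k))"
proof -
  have "(A * y ^ j) ^ p * (B * y ^ k) ^ q = (A ^ p * B ^ q) * y ^ (p * j + q * k)"
    by (simp add: power_mult_distrib power_add mult.commute[of p] power_mult ac_simps)
  hence "((A * y ^ j) ^ p * (B * y ^ k) ^ q) ^ e = (A ^ p * B ^ q) ^ e * (y ^ (p * j + q * k)) ^ e"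
    by (simp add: power_mult_distrib)
  thus ?thesis by (simp add: mult.commute[of e] power_mult)
qed

context qf begin

lemma mono_base:
  fixes P :: "('n::finite \<Rightarrow>\<^sub>0 nat) \<Rightarrow>\<^sub>0 'a"
  assumes K: "\<forall>m\<in>ks P. m = a" and D: "\<forall>x. (\<forall>i. x i \<noteq> 0) \<longrightarrow> qle (c * mmono a x) (mpeval P x)"
  shows "\<exists>N>0. qle ((sng a c) ^ N) (P ^ N)"
proof -
  have P: "P = sng a (lk P a)"
  proof (rule poly_mapping_eqI)
    fix k show "lk P k = lk (sng a (lk P a)) k"
      using K by (cases "k = a") (auto simp: lookup_single_not_eq in_keys_iff)
  qed
  have "qle (c * mmono a (\<lambda>_. 1)) (mpeval P (\<lambda>_. 1))" using D by simp
  hence "qle c (lk P a)" by (subst (asm) P) (simp add: mpeval_single mmono_def)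
  hence "qle (sng a c) P" using single_qle P by metis
  thus ?thesis by (intro exI[of _ 1]) simp
qed

end

context qf begin

lemmas [trans] = Ktrans

lemma mono_step:
  fixes P :: "('n::finite \<Rightarrow>\<^sub>0 nat) \<Rightarrow>\<^sub>0 'a"
  assumes IH: "\<forall>(P::('n \<Rightarrow>\<^sub>0 nat) \<Rightarrow>\<^sub>0 'a) a c. (\<forall>m\<in>ks P. \<forall>j. j \<notin> V \<longrightarrow> lk m j = lk a j) \<longrightarrow> c \<noteq> 0 \<longrightarrow>
          (\<forall>x. (\<forall>i. x i \<noteq> 0) \<longrightarrow> qle (c * mmono a x) (mpeval P x)) \<longrightarrow>
          (\<exists>N>0. qle ((sng a c) ^ N) (P ^ N))"
    and KP: "\<forall>m\<in>ks P. \<forall>j. j \<notin> insert i V \<longrightarrow> lk m j = lk a j"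
    and c: "c \<noteq> 0"
    and D: "\<forall>x. (\<forall>i. x i \<noteq> 0) \<longrightarrow> qle (c * mmono a x) (mpeval P x)"
  shows "\<exists>N>0. qle ((sng a c) ^ N) (P ^ N)"
proof -
  define E where "E = ks P"
  have finE: "finite E" by (simp add: E_def)
  define al where "al = lk a i"
  define Dm where "Dm = Max (insert al ((\<lambda>m. lk m i) ` E))"
  define L :: nat where "L = fact Dm"
  have L0: "L > 0" by (simp add: L_def)
  have mD: "lk m i \<le> Dm" if "m \<in> E" for m
    unfolding Dm_def using finE that by (intro Max_ge) auto
  have dvdL: "(lk m' i - lk m i) dvd L" if "m' \<in> E" "lk m i < lk m' i" for m m'
    unfolding L_def using mD[OF that(1)] that(2) by (intro dvd_fact) auto
  define Eq where "Eq = {m\<in>E. lk m i = al}"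
  define Pr where "Pr = {mm \<in> E \<times> E. lk (fst mm) i < al \<and> al < lk (snd mm) i}"
  have finEq: "finite Eq" "finite Pr" using finE by (auto simp: Eq_def Pr_def)
  define pp where "pp mm = lk (snd mm) i - al" for mm :: "('n \<Rightarrow>\<^sub>0 nat) \<times> ('n \<Rightarrow>\<^sub>0 nat)"
  define qq where "qq mm = al - lk (fst mm) i" for mm :: "('n \<Rightarrow>\<^sub>0 nat) \<times> ('n \<Rightarrow>\<^sub>0 nat)"
  define ee where "ee mm = L div (lk (snd mm) i - lk (fst mm) i)" for mm :: "('n \<Rightarrow>\<^sub>0 nat) \<times> ('n \<Rightarrow>\<^sub>0 nat)"
  have pqe: "(pp mm + qq mm) * ee mm = L" if "mm \<in> Pr" for mm
  proof -
    have "pp mm + qq mm = lk (snd mm) i - lk (fst mm) i" using that by (auto simp: Pr_def pp_def qq_def)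
    moreover have "(lk (snd mm) i - lk (fst mm) i) dvd L" using that by (intro dvdL) (auto simp: Pr_def)
    ultimately show ?thesis by (simp add: ee_def)
  qed
  define t1 where "t1 m = (sng m (lk P m)) ^ L" for m
  define tp where "tp mm = ((sng (fst mm) (lk P (fst mm))) ^ pp mm * (sng (snd mm) (lk P (snd mm))) ^ qq mm) ^ ee mm"
    for mm
  define Q where "Q = sum t1 Eq + sum tp Pr"
  have QP: "qle Q (P ^ L)"
  proof -
    have "qle (sum t1 Eq) (P ^ L)"
      by (rule Psum_bound[OF finEq(1)]) (simp add: t1_def Ppower single_le)
    moreover have "qle (sum tp Pr) (P ^ L)"
    proof (rule Psum_bound[OF finEq(2)])
      fix mm assume mm: "mm \<in> Pr"
      have "qle (tp mm) ((P ^ pp mm * P ^ qq mm) ^ ee mm)"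
        unfolding tp_def by (intro Ppower Pmult2 single_le)
      moreover have "(P ^ pp mm * P ^ qq mm) ^ ee mm = P ^ L"
        using pqe[OF mm] by (simp flip: power_add power_mult)
      ultimately show "qle (tp mm) (P ^ L)" by simp
    qed
    ultimately show ?thesis unfolding Q_def by (rule Padd_bound)
  qed
  have t1s: "t1 m = sng (mpow L m) (lk P m ^ L)" for m
    by (simp add: t1_def single_pow)
  have tps: "tp mm = sng (mpow (ee mm) (mpow (pp mm) (fst mm) + mpow (qq mm) (snd mm)))
                 ((lk P (fst mm) ^ pp mm * lk P (snd mm) ^ qq mm) ^ ee mm)" for mm
    by (simp add: tp_def single_pow mult_single)
  have KQ: "\<forall>m\<in>ks Q. \<forall>j. j \<notin> V \<longrightarrow> lk m j = lk (mpow L a) j"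
  proof (intro ballI allI impI)
    fix k j assume k: "k \<in> ks Q" and j: "j \<notin> V"
    have "k \<in> ks (sum t1 Eq) \<union> ks (sum tp Pr)" using k keys_add[of "sum t1 Eq" "sum tp Pr"] unfolding Q_def by blast
    hence "k \<in> (\<Union>m\<in>Eq. ks (t1 m)) \<union> (\<Union>mm\<in>Pr. ks (tp mm))"
      using keys_sum[of t1 Eq] keys_sum[of tp Pr] by blast
    thus "lk k j = lk (mpow L a) j"
    proof
      assume "k \<in> (\<Union>m\<in>Eq. ks (t1 m))"
      then obtain m where m: "m \<in> Eq" "k = mpow L m" by (auto simp: t1s split: if_splits)
      show ?thesis
      proof (cases "j = i")
        case True then show ?thesis using m by (simp add: lookup_mpow Eq_def al_def)
      next
        case False
        hence "lk m j = lk a j" using KP m j by (auto simp: Eq_def E_def)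
        then show ?thesis using m by (simp add: lookup_mpow)
      qed
    next
      assume "k \<in> (\<Union>mm\<in>Pr. ks (tp mm))"
      then obtain mm where mm: "mm \<in> Pr"
        and kk: "k = mpow (ee mm) (mpow (pp mm) (fst mm) + mpow (qq mm) (snd mm))"
        by (auto simp: tps split: if_splits)
      have lk_k: "lk k j = ee mm * (pp mm * lk (fst mm) j + qq mm * lk (snd mm) j)"
        unfolding kk by (simp add: lookup_mpow lookup_add)
      show ?thesis
      proof (cases "j = i")
        case True
        have "pp mm * lk (fst mm) i + qq mm * lk (snd mm) i = al * (lk (snd mm) i - lk (fst mm) i)"
          using mm nat_ident[of "lk (fst mm) i" al "lk (snd mm) i"]
          by (simp add: Pr_def pp_def qq_def)
        moreover have "pp mm + qq mm = lk (snd mm) i - lk (fst mm) i"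
          using mm by (auto simp: Pr_def pp_def qq_def)
        ultimately have "lk k j = al * ((pp mm + qq mm) * ee mm)"
          using lk_k True by (simp add: ac_simps)
        then show ?thesis using pqe[OF mm] True by (simp add: lookup_mpow al_def)
      next
        case False
        hence "lk (fst mm) j = lk a j" "lk (snd mm) j = lk a j"
          using KP mm j by (auto simp: Pr_def E_def)
        hence "lk k j = ((pp mm + qq mm) * ee mm) * lk a j"
          using lk_k by (simp add: algebra_simps)
        then show ?thesis using pqe[OF mm] by (simp add: lookup_mpow)
      qed
    qed
  qed
  have DQ: "\<forall>x. (\<forall>i. x i \<noteq> 0) \<longrightarrow> qle (c ^ L * mmono (mpow L a) x) (mpeval Q x)"
  proof (intro allI impI)
    fix x :: "'n \<Rightarrow> 'a" assume x: "\<forall>i. x i \<noteq> 0"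
    define x1 where "x1 = x(i := 1)"
    define c' where "c' = c * mmono a x1"
    define d where "d m = lk P m * mmono m x1" for m
    have x1nz: "\<And>j. x1 j \<noteq> 0" using x by (simp add: x1_def)
    have c'0: "c' \<noteq> 0" using c mmono_nz[OF x1nz] by (simp add: c'_def mult_eq0)
    have xx: "x(i := x i) = x" by simp
    have mx: "mmono m x = x i ^ lk m i * mmono m x1" for m
      using mmono_upd[of m x i "x i"] unfolding x1_def xx .
    have hyp: "qle (c' * t ^ al) (\<Sum>m\<in>E. d m * t ^ lk m i)" if t: "t \<noteq> 0" for t
    proof -
      have nz: "\<forall>j. (x(i := t)) j \<noteq> 0" using x t by simp
      have "qle (c * mmono a (x(i := t))) (mpeval P (x(i := t)))" using D nz by blast
      moreover have "c * mmono a (x(i := t)) = c' * t ^ al"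
        unfolding c'_def al_def x1_def by (simp add: mmono_upd[of a x i t] ac_simps)
      moreover have "mpeval P (x(i := t)) = (\<Sum>m\<in>E. d m * t ^ lk m i)"
        unfolding mpeval_mmono E_def d_def x1_def
        by (rule sum.cong) (simp_all add: mmono_upd[of _ x i t] ac_simps)
      ultimately show ?thesis by simp
    qed
    have lhs: "c ^ L * mmono (mpow L a) x = (c' * x i ^ al) ^ L"
      by (simp add: mmono_mpow mx[of a] c'_def al_def power_mult_distrib ac_simps)
    have vt1: "mpeval (t1 m) x = (d m * x i ^ lk m i) ^ L" for m
      by (simp add: t1_def mpeval_power mpeval_single mx d_def ac_simps)
    have vtp: "mpeval (tp mm) x = ((d (fst mm) * x i ^ lk (fst mm) i) ^ pp mm *
                  (d (snd mm) * x i ^ lk (snd mm) i) ^ qq mm) ^ ee mm" for mm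
      by (simp add: tp_def mpeval_power mpeval_single mpeval_mult mx d_def ac_simps)
    have QE: "mpeval Q x = (\<Sum>m\<in>Eq. mpeval (t1 m) x) + (\<Sum>mm\<in>Pr. mpeval (tp mm) x)"
      by (simp add: Q_def mpeval_add mpeval_sum)
    from oneD[OF finE c'0 hyp]
    show "qle (c ^ L * mmono (mpow L a) x) (mpeval Q x)"
    proof
      assume "\<exists>m\<in>E. lk m i = al \<and> qle c' (d m)"
      then obtain m where m: "m \<in> E" "lk m i = al" "qle c' (d m)" by blast
      have "qle ((c' * x i ^ al) ^ L) ((d m * x i ^ lk m i) ^ L)"
        using Kpower[OF Kmult[OF m(3)], of "x i ^ al" L] m(2) by simp
      also have "\<dots> = mpeval (t1 m) x" by (rule vt1[symmetric])
      also have "qle \<dots> (\<Sum>m\<in>Eq. mpeval (t1 m) x)"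
        using m by (intro Ksum_member[OF finEq(1)]) (simp add: Eq_def)
      also have "qle \<dots> (mpeval Q x)" unfolding QE by (rule KaddL)
      finally show ?thesis unfolding lhs .
    next
      assume "\<exists>s\<in>E. \<exists>s'\<in>E. lk s i < al \<and> al < lk s' i \<and>
            qle (c' ^ (lk s' i - lk s i)) (d s ^ (lk s' i - al) * d s' ^ (al - lk s i))"
      then obtain m m' where mm: "m \<in> E" "m' \<in> E" "lk m i < al" "al < lk m' i"
        and le: "qle (c' ^ (lk m' i - lk m i)) (d m ^ (lk m' i - al) * d m' ^ (al - lk m i))"
        by blast
      define w where "w = (m, m')"
      have w: "w \<in> Pr" using mm by (simp add: w_def Pr_def)
      have pq: "pp w + qq w = lk m' i - lk m i" using mm by (simp add: w_def pp_def qq_def)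
      have "qle ((c' ^ (pp w + qq w)) ^ ee w) ((d m ^ pp w * d m' ^ qq w) ^ ee w)"
        using le by (intro Kpower) (simp add: pq, simp add: w_def pp_def qq_def)
      hence "qle (c' ^ L) ((d m ^ pp w * d m' ^ qq w) ^ ee w)"
        using pqe[OF w] by (simp flip: power_mult)
      hence "qle (c' ^ L * x i ^ (ee w * (pp w * lk m i + qq w * lk m' i)))
                 ((d m ^ pp w * d m' ^ qq w) ^ ee w * x i ^ (ee w * (pp w * lk m i + qq w * lk m' i)))"
        by (rule Kmult)
      moreover have "ee w * (pp w * lk m i + qq w * lk m' i) = al * L"
      proof -
        have "pp w * lk m i + qq w * lk m' i = al * (lk m' i - lk m i)"
          using nat_ident[OF mm(3) mm(4)] by (simp add: w_def pp_def qq_def)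
        thus ?thesis using pqe[OF w] pq by (simp add: ac_simps)
      qed
      moreover have "(d m ^ pp w * d m' ^ qq w) ^ ee w * x i ^ (ee w * (pp w * lk m i + qq w * lk m' i))
           = mpeval (tp w) x"
        unfolding vtp by (simp add: w_def pow_alg)
      moreover have "c' ^ L * x i ^ (al * L) = (c' * x i ^ al) ^ L"
        by (simp add: power_mult_distrib power_mult)
      ultimately have "qle ((c' * x i ^ al) ^ L) (mpeval (tp w) x)" by simp
      also have "qle (mpeval (tp w) x) (\<Sum>mm\<in>Pr. mpeval (tp mm) x)"
        by (rule Ksum_member[OF finEq(2) w])
      also have "qle \<dots> (mpeval Q x)" unfolding QE by (rule KaddR)
      finally show ?thesis unfolding lhs .
    qed
  qed
  have cL: "c ^ L \<noteq> 0" using c by (simp add: power_nz)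
  obtain N' where N': "N' > 0" "qle ((sng (mpow L a) (c ^ L)) ^ N') (Q ^ N')"
    using IH KQ cL DQ by blast
  have "(sng a c) ^ (L * N') = (sng (mpow L a) (c ^ L)) ^ N'"
    by (simp add: power_mult single_pow)
  moreover have "qle (Q ^ N') (P ^ (L * N'))"
    using Ppower[OF QP, of N'] by (simp add: power_mult)
  ultimately have "qle ((sng a c) ^ (L * N')) (P ^ (L * N'))"
    using N'(2) Ptrans by metis
  thus ?thesis using L0 N'(1) by (intro exI[of _ "L * N'"]) simp
qed

end

context qf begin

lemma mono_main:
  assumes "finite V"
  shows "\<forall>(P::('n::finite \<Rightarrow>\<^sub>0 nat) \<Rightarrow>\<^sub>0 'a) a c. (\<forall>m\<in>ks P. \<forall>j. j \<notin> V \<longrightarrow> lk m j = lk a j) \<longrightarrow> c \<noteq> 0 \<longrightarrow>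
          (\<forall>x. (\<forall>i. x i \<noteq> 0) \<longrightarrow> qle (c * mmono a x) (mpeval P x)) \<longrightarrow>
          (\<exists>N>0. qle ((sng a c) ^ N) (P ^ N))"
  using assms
proof (induction V rule: finite_induct)
  case empty
  show ?case
  proof (intro allI impI)
    fix P :: "('n \<Rightarrow>\<^sub>0 nat) \<Rightarrow>\<^sub>0 'a" and a c
    assume K: "\<forall>m\<in>ks P. \<forall>j. j \<notin> {} \<longrightarrow> lk m j = lk a j"
      and D: "\<forall>x. (\<forall>i. x i \<noteq> 0) \<longrightarrow> qle (c * mmono a x) (mpeval P x)"
    have "\<forall>m\<in>ks P. m = a" using K by (auto intro: poly_mapping_eqI)
    thus "\<exists>N>0. qle (sng a c ^ N) (P ^ N)" using mono_base D by blast
  qed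
next
  case (insert i V)
  show ?case
  proof (intro allI impI)
    fix P :: "('n \<Rightarrow>\<^sub>0 nat) \<Rightarrow>\<^sub>0 'a" and a c
    assume K: "\<forall>m\<in>ks P. \<forall>j. j \<notin> insert i V \<longrightarrow> lk m j = lk a j" and c: "c \<noteq> 0"
      and D: "\<forall>x. (\<forall>i. x i \<noteq> 0) \<longrightarrow> qle (c * mmono a x) (mpeval P x)"
    show "\<exists>N>0. qle (sng a c ^ N) (P ^ N)"
      by (rule mono_step[OF insert.IH K c D])
  qed
qed

lemma ones_nz: "P \<noteq> 0 \<Longrightarrow> mpeval (P :: ('n::finite \<Rightarrow>\<^sub>0 nat) \<Rightarrow>\<^sub>0 'a) (\<lambda>_. 1) \<noteq> 0"
  by (rule mpeval_nz) simp_all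

lemma prod_poly_nz:
  fixes R1 R2 :: "('n::finite \<Rightarrow>\<^sub>0 nat) \<Rightarrow>\<^sub>0 'a"
  assumes "R1 \<noteq> 0" "R2 \<noteq> 0" shows "R1 * R2 \<noteq> 0"
proof
  assume "R1 * R2 = 0"
  hence "mpeval (R1 * R2) (\<lambda>_. 1) = 0" by (simp add: mpeval_zero)
  thus False using ones_nz[OF assms(1)] ones_nz[OF assms(2)] by (simp add: mpeval_mult mult_eq0)
qed

lemma mono_single:
  fixes P :: "('n::finite \<Rightarrow>\<^sub>0 nat) \<Rightarrow>\<^sub>0 'a"
  assumes D: "\<forall>x. (\<forall>i. x i \<noteq> 0) \<longrightarrow> qle (c * mmono a x) (mpeval P x)"
  shows "\<exists>R. R \<noteq> 0 \<and> R * (P + sng a c) = R * P"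
proof (cases "c = 0")
  case True then show ?thesis by (intro exI[of _ 1]) simp
next
  case False
  obtain N where N: "N > 0" "qle ((sng a c) ^ N) (P ^ N)"
    using mono_main[of "UNIV :: 'n set", simplified, rule_format, OF False] D by blast
  then obtain k where k: "N = Suc k" using gr0_implies_Suc by blast
  have e: "(P + sng a c) ^ k * (P + sng a c) = (P + sng a c) ^ k * P"
    by (rule Pabsorb) (use N k in simp)
  have "lk (P + sng a c) a \<noteq> 0" using False by (simp add: lookup_add add_eq0)
  hence "P + sng a c \<noteq> 0" by auto
  hence "mpeval (P + sng a c) (\<lambda>_. 1) \<noteq> 0" by (rule ones_nz)
  hence "mpeval ((P + sng a c) ^ k) (\<lambda>_. 1) \<noteq> 0" by (simp add: mpeval_power power_nz)
  hence "(P + sng a c) ^ k \<noteq> 0" by (auto simp: mpeval_zero)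
  thus ?thesis using e by blast
qed

lemma dom_sum:
  fixes P :: "('n::finite \<Rightarrow>\<^sub>0 nat) \<Rightarrow>\<^sub>0 'a"
  assumes "finite T"
  shows "(\<forall>m\<in>T. \<forall>x. (\<forall>i. x i \<noteq> 0) \<longrightarrow> qle (g m * mmono m x) (mpeval P x)) \<longrightarrow>
         (\<exists>R. R \<noteq> 0 \<and> R * (P + (\<Sum>m\<in>T. sng m (g m))) = R * P)"
  using assms
proof (induction T rule: finite_induct)
  case empty then show ?case by (intro impI exI[of _ 1]) simp
next
  case (insert m T)
  show ?case
  proof
    assume H: "\<forall>m'\<in>insert m T. \<forall>x. (\<forall>i. x i \<noteq> 0) \<longrightarrow> qle (g m' * mmono m' x) (mpeval P x)"
    obtain R1 where R1: "R1 \<noteq> 0" "R1 * (P + (\<Sum>m\<in>T. sng m (g m))) = R1 * P"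
      using insert.IH H by auto
    obtain R2 where R2: "R2 \<noteq> 0" "R2 * (P + sng m (g m)) = R2 * P"
      using mono_single H by blast
    let ?S = "\<Sum>m\<in>T. sng m (g m)"
    have "R1 * R2 * (P + (\<Sum>m\<in>insert m T. sng m (g m))) = R2 * (R1 * (P + ?S)) + R1 * (R2 * sng m (g m))"
      using insert.hyps by (simp add: algebra_simps)
    also have "\<dots> = R1 * (R2 * (P + sng m (g m)))" using R1(2) by (simp add: algebra_simps)
    also have "\<dots> = R1 * R2 * P" using R2(2) by (simp add: algebra_simps)
    finally show "\<exists>R. R \<noteq> 0 \<and> R * (P + (\<Sum>m\<in>insert m T. sng m (g m))) = R * P"
      using prod_poly_nz[OF R1(1) R2(1)] by blast
  qed
qed

lemma dom_poly:
  fixes P S :: "('n::finite \<Rightarrow>\<^sub>0 nat) \<Rightarrow>\<^sub>0 'a"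
  assumes D: "\<And>x. (\<forall>i. x i \<noteq> 0) \<Longrightarrow> qle (mpeval S x) (mpeval P x)"
  shows "\<exists>R. R \<noteq> 0 \<and> R * (P + S) = R * P"
proof -
  have "\<forall>m\<in>ks S. \<forall>x. (\<forall>i. x i \<noteq> 0) \<longrightarrow> qle (lk S m * mmono m x) (mpeval P x)"
  proof (intro ballI allI impI)
    fix m x assume m: "m \<in> ks S" and x: "\<forall>i. (x::'n \<Rightarrow> 'a) i \<noteq> 0"
    have "qle (lk S m * mmono m x) (mpeval S x)"
      unfolding mpeval_mmono by (rule Ksum_member[OF finite_keys m])
    thus "qle (lk S m * mmono m x) (mpeval P x)" using D[OF x] Ktrans by blast
  qed
  hence "\<exists>R. R \<noteq> 0 \<and> R * (P + (\<Sum>m\<in>ks S. sng m (lk S m))) = R * P"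
    using dom_sum[OF finite_keys, of S "lk S" P] by blast
  thus ?thesis using poly_sum_singles[of S] by simp
qed

end

lemma roots_from_closed:
  fixes K :: "'a::comm_semiring_1 itself" and g :: 'a
  assumes one: "(1::'a) + 1 = 1" and AC: "alg_closed_qf K" and g: "g \<noteq> 0" and n: "n > 0"
  shows "\<exists>r. r ^ n = g"
proof -
  define p :: "'a poly" where "p = monom 1 n + [:g:]"
  have cf: "coeff p k = (if k = n then 1 else 0) + (if k = 0 then g else 0)" for k
    by (simp add: p_def coeff_monom pCons_one coeff_pCons split: nat.split)
  have dg: "degree p = n"
    unfolding p_def using n by (subst degree_add_eq_left) (simp_all add: degree_monom_eq)
  obtain x where x: "is_qroot p x" using AC dg n unfolding alg_closed_qf_def by auto
  have c0: "coeff p 0 = g" using cf n by simp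
  have cn: "coeff p n = 1" using cf n by simp
  have add0: "v = 0" if h: "u + v = 0" for u v :: 'a
  proof -
    have "qle v (u + v)" by (rule qle_addR[OF one])
    thus ?thesis using h by (simp add: qle_def)
  qed
  have "poly p x = x ^ n + g" by (simp add: p_def poly_monom)
  hence "poly p x \<noteq> 0" using add0 g by auto
  then obtain i j where ij: "i \<noteq> j" "i \<le> n" "j \<le> n" "coeff p i \<noteq> 0" "coeff p j \<noteq> 0"
    and all: "\<forall>k\<le>n. coeff p k \<noteq> 0 \<longrightarrow> qle (coeff p k * x ^ k) (coeff p i * x ^ i) \<and>
                                        qle (coeff p k * x ^ k) (coeff p j * x ^ j)"
    using x unfolding is_qroot_def dg by blast
  have ij01: "i = 0 \<or> i = n" "j = 0 \<or> j = n" using ij(4,5) cf by (auto split: if_splits)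
  have "qle (x ^ n) g \<and> qle g (x ^ n)"
  proof (cases "i = 0")
    case True
    hence "j = n" using ij ij01 by auto
    thus ?thesis using all[rule_format, of n] all[rule_format, of 0] True c0 cn g by simp
  next
    case False
    hence "i = n" "j = 0" using ij ij01 by auto
    thus ?thesis using all[rule_format, of n] all[rule_format, of 0] c0 cn g by simp
  qed
  thus ?thesis using qle_antisym[OF one] by blast
qed

theorem theorem3p7:
  fixes K :: "'a::comm_semiring_1 itself"
  assumes "quasi_field_char1 K"
    and "totally_ordered_qf K"
    and "infinite (UNIV :: 'a set)"
    and "alg_closed_qf K"
  shows "(\<forall>P Q :: ('n::finite \<Rightarrow>\<^sub>0 nat) \<Rightarrow>\<^sub>0 'a. rat_equiv P Q \<longrightarrow> mpeval P = mpeval Q)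
    \<and> (\<forall>P Q :: ('n \<Rightarrow>\<^sub>0 nat) \<Rightarrow>\<^sub>0 'a. mpeval P = mpeval Q \<longrightarrow> rat_equiv P Q)
    \<and> (\<forall>P Q :: ('n \<Rightarrow>\<^sub>0 nat) \<Rightarrow>\<^sub>0 'a. mpeval (P + Q) = (\<lambda>x. mpeval P x + mpeval Q x))
    \<and> (\<forall>P Q :: ('n \<Rightarrow>\<^sub>0 nat) \<Rightarrow>\<^sub>0 'a. mpeval (P * Q) = (\<lambda>x. mpeval P x * mpeval Q x))
    \<and> mpeval (0 :: ('n \<Rightarrow>\<^sub>0 nat) \<Rightarrow>\<^sub>0 'a) = (\<lambda>x. 0)
    \<and> mpeval (1 :: ('n \<Rightarrow>\<^sub>0 nat) \<Rightarrow>\<^sub>0 'a) = (\<lambda>x. 1)"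
proof -
  have one: "(1::'a) + 1 = 1" and inv: "\<And>x::'a. x \<noteq> 0 \<Longrightarrow> \<exists>y. x * y = 1"
    using assms(1) unfolding quasi_field_char1_def by auto
  have tot: "\<And>u v::'a. qle u v \<or> qle v u" using assms(2) unfolding totally_ordered_qf_def by auto
  have rt: "\<And>(g::'a) n. g \<noteq> 0 \<Longrightarrow> n > 0 \<Longrightarrow> \<exists>r. r ^ n = g"
    using roots_from_closed[OF one assms(4)] by blast
  interpret qf K using one inv tot assms(3) rt by unfold_locales auto
  have c1: "mpeval P = mpeval Q" if RE: "rat_equiv P Q" for P Q :: "('n \<Rightarrow>\<^sub>0 nat) \<Rightarrow>\<^sub>0 'a"
  proof -
    have "\<exists>R. R \<noteq> 0 \<and> R * P = R * Q" using RE by (simp only: rat_equiv_def)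
    then obtain R where R: "R \<noteq> 0" "R * P = R * Q" by blast
    have G: "mpeval P y = mpeval Q y" if y: "\<And>i. y i \<noteq> 0" for y
    proof -
      have "mpeval (R * P) y = mpeval (R * Q) y" using R(2) by simp
      hence "mpeval R y * mpeval P y = mpeval R y * mpeval Q y" by (simp only: mpeval_mult)
      hence "mpeval P y * mpeval R y = mpeval Q y * mpeval R y" by (simp only: mult.commute)
      thus ?thesis by (rule cancel[OF mpeval_nz[OF y R(1)]])
    qed
    show ?thesis
    proof
      fix x
      have "qle (mpeval P x) (mpeval Q x)"
      proof (rule extend)
        fix y :: "'n \<Rightarrow> 'a" assume y: "\<And>i. y i \<noteq> 0"
        show "qle (mpeval P y) (mpeval Q y)" unfolding G[OF y] by (rule Krefl)
      qed
      moreover have "qle (mpeval Q x) (mpeval P x)"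
      proof (rule extend)
        fix y :: "'n \<Rightarrow> 'a" assume y: "\<And>i. y i \<noteq> 0"
        show "qle (mpeval Q y) (mpeval P y)" unfolding G[OF y] by (rule Krefl)
      qed
      ultimately show "mpeval P x = mpeval Q x" by (rule Kantisym)
    qed
  qed
  have c2: "rat_equiv P Q" if e: "mpeval P = mpeval Q" for P Q :: "('n \<Rightarrow>\<^sub>0 nat) \<Rightarrow>\<^sub>0 'a"
  proof -
    obtain R1 where R1: "R1 \<noteq> 0" "R1 * (P + Q) = R1 * P"
      using dom_poly[of Q P] e Krefl by auto
    obtain R2 where R2: "R2 \<noteq> 0" "R2 * (Q + P) = R2 * Q"
      using dom_poly[of P Q] e Krefl by auto
    have "R1 * R2 * P = R2 * (R1 * (P + Q))" using R1(2) by (simp add: ac_simps)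
    also have "\<dots> = R1 * (R2 * (Q + P))" by (simp add: ac_simps)
    also have "\<dots> = R1 * R2 * Q" using R2(2) by (simp add: ac_simps)
    finally show ?thesis unfolding rat_equiv_def using prod_poly_nz[OF R1(1) R2(1)] by blast
  qed
  show ?thesis
  proof (intro conjI allI impI)
    fix P Q :: "('n \<Rightarrow>\<^sub>0 nat) \<Rightarrow>\<^sub>0 'a"
    show "rat_equiv P Q \<Longrightarrow> mpeval P = mpeval Q" by (rule c1)
    show "mpeval P = mpeval Q \<Longrightarrow> rat_equiv P Q" by (rule c2)
    show "mpeval (P + Q) = (\<lambda>x. mpeval P x + mpeval Q x)" by (rule ext) (rule mpeval_add)
    show "mpeval (P * Q) = (\<lambda>x. mpeval P x * mpeval Q x)" by (rule ext) (rule mpeval_mult)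
  next
    show "mpeval (0 :: ('n \<Rightarrow>\<^sub>0 nat) \<Rightarrow>\<^sub>0 'a) = (\<lambda>x. 0)" by (rule ext) (rule mpeval_zero)
    show "mpeval (1 :: ('n \<Rightarrow>\<^sub>0 nat) \<Rightarrow>\<^sub>0 'a) = (\<lambda>x. 1)" by (rule ext) (rule mpeval_one)
  qed
qed

end
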